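(* Let $\mathbb{H}$ be a reproducing kernel Hilbert space with inner product $\langle\cdot,\cdot\rangle$ and feature map $\phi$, and let $(X,A,Y)$ be jointly distributed with $Y=\langle\phi(X),y\rangle$ and $A=\langle\phi(X),a\rangle$ for some nonzero $y,a\in\mathbb{H}$, with $\operatorname{Var}(Y),\operatorname{Var}(A)>0$; let $\rho_{YA}$ be the correlation coefficient of $Y$ and $A$. Let $c\in[0,\rho_{YA}^2\operatorname{Var}(A)]$ and $\alpha:=c/\operatorname{Var}(A)$. Then every (possibly randomized) representation $Z=g(X)$ with $\operatorname{Var}\mathbb{E}[A\mid Z]\le c$ satisfies $$\operatorname{Var}\mathbb{E}[Y\mid Z]\le \operatorname{Var}(Y)\Big(2|\rho_{YA}|\sqrt{(1-\rho_{YA}^2)\alpha(1-\alpha)}+1-\alpha-\rho_{YA}^2+2\alpha\rho_{YA}^2\Big).$$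
   Context: A (possibly randomized) representation is $Z=g(X,S)$ for a measurable $g$ and auxiliary randomness $S$ independent of $(X,A,Y)$. $\phi(X)$ is assumed to have finite second moment in $\mathbb{H}$. *)

theory Defs
  imports "HOL-Probability.Probability"
begin

definition covariance :: "'a measure \<Rightarrow> ('a \<Rightarrow> real) \<Rightarrow> ('a \<Rightarrow> real) \<Rightarrow> real" where
  "covariance M U V =
     (\<integral>\<omega>. (U \<omega> - (\<integral>\<omega>'. U \<omega>' \<partial>M)) * (V \<omega> - (\<integral>\<omega>'. V \<omega>' \<partial>M)) \<partial>M)"

definition correlation :: "'a measure \<Rightarrow> ('a \<Rightarrow> real) \<Rightarrow> ('a \<Rightarrow> real) \<Rightarrow> real" where
  "correlation M U V =
     covariance M U V / (sqrt (prob_space.variance M U) * sqrt (prob_space.variance M V))"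

definition cond_exp_given :: "'a measure \<Rightarrow> ('a \<Rightarrow> 'z) \<Rightarrow> 'z measure \<Rightarrow> ('a \<Rightarrow> real) \<Rightarrow> ('a \<Rightarrow> real)" where
  "cond_exp_given M Z MZ f = real_cond_exp M (vimage_algebra (space M) Z MZ) f"

end

theory Submission
  imports Defs
begin

lemma key_trig:
  fixes x s al r :: real
  assumes x0: "0 \<le> x" and x1: "x \<le> 1" and s0: "0 \<le> s" and s1: "s \<le> 1" and sa: "s \<le> al"
    and ar: "al \<le> r\<^sup>2" and r0: "0 \<le> r"
    and hr: "r \<le> sqrt x * sqrt s + sqrt (1 - x) * sqrt (1 - s)"
  shows "x \<le> al * r\<^sup>2 + (1 - al) * (1 - r\<^sup>2) + 2 * r * sqrt (al * (1 - al) * (1 - r\<^sup>2))"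
proof -
  define A where "A = arccos (sqrt x)"
  define B where "B = arccos (sqrt s)"
  have cA: "cos A = sqrt x" and sA: "sin A = sqrt (1 - x)"
    using x0 x1 by (auto simp: A_def sin_arccos_abs cos_arccos_abs)
  have cB: "cos B = sqrt s" and sB: "sin B = sqrt (1 - s)"
    using s0 s1 by (auto simp: B_def sin_arccos_abs cos_arccos_abs)
  have A0: "0 \<le> A" "A \<le> pi/2"
  proof -
    have h: "-1 \<le> sqrt x" "sqrt x \<le> 1" "0 \<le> sqrt x" using x0 x1 by (smt (verit) real_sqrt_ge_zero real_sqrt_le_1_iff)+
    then show "0 \<le> A" "A \<le> pi/2" unfolding A_def using arccos_lbound[OF h(1,2)] arccos_le_pi2[OF h(3,2)] by auto
  qed
  have B0: "0 \<le> B" "B \<le> pi/2"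
  proof -
    have h: "-1 \<le> sqrt s" "sqrt s \<le> 1" "0 \<le> sqrt s" using s0 s1 by (smt (verit) real_sqrt_ge_zero real_sqrt_le_1_iff)+
    then show "0 \<le> B" "B \<le> pi/2" unfolding B_def using arccos_lbound[OF h(1,2)] arccos_le_pi2[OF h(3,2)] by auto
  qed
  have cd: "cos (A - B) = sqrt x * sqrt s + sqrt (1 - x) * sqrt (1 - s)"
    by (simp add: cos_diff cA cB sA sB)
  have r1: "r \<le> 1" using hr cd cos_le_one[of "A - B"] by linarith
  have al0: "0 \<le> al" using s0 sa by linarith
  have al1: "al \<le> 1" using ar r1 r0 by (smt (verit) power_le_one)
  define B0 where "B0 = arccos (sqrt al)"
  define T where "T = arccos r"
  have cB0: "cos B0 = sqrt al" and sB0: "sin B0 = sqrt (1 - al)"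
    using al0 al1 by (auto simp: B0_def sin_arccos_abs cos_arccos_abs)
  have cT: "cos T = r" and sT: "sin T = sqrt (1 - r\<^sup>2)"
    using r0 r1 by (auto simp: T_def sin_arccos_abs cos_arccos_abs)
  have B00: "0 \<le> B0" "B0 \<le> pi/2"
  proof -
    have h: "-1 \<le> sqrt al" "sqrt al \<le> 1" "0 \<le> sqrt al" using al0 al1 by (smt (verit) real_sqrt_ge_zero real_sqrt_le_1_iff)+
    then show "0 \<le> B0" "B0 \<le> pi/2" unfolding B0_def using arccos_lbound[OF h(1,2)] arccos_le_pi2[OF h(3,2)] by auto
  qed
  have T0: "0 \<le> T" "T \<le> pi/2"
  proof -
    have h: "-1 \<le> r" "r \<le> 1" "0 \<le> r" using r0 r1 by auto
    then show "0 \<le> T" "T \<le> pi/2" unfolding T_def using arccos_lbound[OF h(1,2)] arccos_le_pi2[OF h(3,2)] by auto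
  qed
  have "cos T \<le> cos \<bar>A - B\<bar>" using cT cd hr by simp
  hence ABT: "\<bar>A - B\<bar> \<le> T"
    using cos_mono_le_eq[of T "\<bar>A - B\<bar>"] A0 B0 T0 by linarith
  have "B0 \<le> B" unfolding B0_def B_def
    by (rule arccos_le_arccos) (use s0 sa al1 in \<open>(smt (verit) real_sqrt_ge_zero real_sqrt_le_1_iff real_sqrt_le_mono)+\<close>)
  moreover have "T \<le> B0" unfolding B0_def T_def
  proof (rule arccos_le_arccos)
    show "sqrt al \<le> r" using ar r0 real_sqrt_le_mono[OF ar] by simp
  qed (use al0 r1 in \<open>(smt (verit) real_sqrt_ge_zero real_sqrt_le_1_iff)+\<close>)
  ultimately have "B0 - T \<le> A" "0 \<le> B0 - T" using ABT by auto
  hence "cos A \<le> cos (B0 - T)"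
    using cos_mono_le_eq[of A "B0 - T"] A0 B00 T0 by linarith
  moreover have cBT: "cos (B0 - T) = sqrt al * r + sqrt (1 - al) * sqrt (1 - r\<^sup>2)"
    by (simp add: cos_diff cB0 cT sB0 sT)
  ultimately have le: "sqrt x \<le> sqrt al * r + sqrt (1 - al) * sqrt (1 - r\<^sup>2)" using cA by simp
  have "x = (sqrt x)\<^sup>2" using x0 by simp
  also have "\<dots> \<le> (sqrt al * r + sqrt (1 - al) * sqrt (1 - r\<^sup>2))\<^sup>2"
    using le x0 by (intro power_mono) auto
  also have "\<dots> = al * r\<^sup>2 + (1 - al) * (1 - r\<^sup>2) + 2 * r * sqrt (al * (1 - al) * (1 - r\<^sup>2))"
  proof -
    have q: "(1 - r\<^sup>2) \<ge> 0" using r0 r1 by (simp add: power_le_one)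
    have e: "sqrt (al * (1 - al) * (1 - r\<^sup>2)) = sqrt al * sqrt (1 - al) * sqrt (1 - r\<^sup>2)"
      by (simp only: real_sqrt_mult)
    have alg: "\<And>a b c r::real. (a*r + b*c)\<^sup>2 = a\<^sup>2*r\<^sup>2 + b\<^sup>2*c\<^sup>2 + 2*r*(a*b*c)"
      by algebra
    show ?thesis unfolding e alg using q al0 al1 by simp
  qed
  finally show ?thesis .
qed
lemma real_bound:
  fixes VY VA P Q c cv rho :: real
  assumes VY: "VY > 0" and VA: "VA > 0" and P0: "0 \<le> P" and P1: "P \<le> VY"
    and Q0: "0 \<le> Q" and Q1: "Q \<le> VA" and Qc: "Q \<le> c" and cle: "c \<le> rho\<^sup>2 * VA"
    and rho: "rho = cv / (sqrt VY * sqrt VA)"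
    and cs: "\<bar>cv\<bar> \<le> sqrt (P * Q) + sqrt ((VY - P) * (VA - Q))"
  shows "P \<le> VY * (2 * \<bar>rho\<bar> * sqrt ((1 - rho\<^sup>2) * (c / VA) * (1 - c / VA))
             + 1 - c / VA - rho\<^sup>2 + 2 * (c / VA) * rho\<^sup>2)"
proof -
  define x where "x = P / VY"
  define s where "s = Q / VA"
  define al where "al = c / VA"
  define r where "r = \<bar>rho\<bar>"
  have sy: "sqrt VY > 0" and sa: "sqrt VA > 0" using VY VA by auto
  have hr: "r \<le> sqrt x * sqrt s + sqrt (1 - x) * sqrt (1 - s)"
  proof -
    have "r = \<bar>cv\<bar> / (sqrt VY * sqrt VA)" using sy sa by (simp add: r_def rho abs_divide abs_mult)
    also have "\<dots> \<le> (sqrt (P * Q) + sqrt ((VY - P) * (VA - Q))) / (sqrt VY * sqrt VA)"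
      using cs sy sa by (intro divide_right_mono) auto
    also have "\<dots> = sqrt x * sqrt s + sqrt (1 - x) * sqrt (1 - s)"
    proof -
      have "1 - x = (VY - P) / VY" using VY by (simp add: x_def field_simps)
      moreover have "1 - s = (VA - Q) / VA" using VA by (simp add: s_def field_simps)
      ultimately show ?thesis using sy sa
        unfolding real_sqrt_mult x_def s_def real_sqrt_divide
        by (simp add: real_sqrt_divide field_simps)
    qed
    finally show ?thesis .
  qed
  have k: "x \<le> al * r\<^sup>2 + (1 - al) * (1 - r\<^sup>2) + 2 * r * sqrt (al * (1 - al) * (1 - r\<^sup>2))"
  proof (rule key_trig)
    show "0 \<le> x" "x \<le> 1" using VY P0 P1 by (auto simp: x_def)
    show "0 \<le> s" "s \<le> 1" using VA Q0 Q1 by (auto simp: s_def)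
    show "s \<le> al" using VA Qc by (simp add: s_def al_def divide_right_mono)
    show "al \<le> r\<^sup>2" using VA cle by (simp add: al_def r_def pos_divide_le_eq)
    show "0 \<le> r" by (simp add: r_def)
  qed (rule hr)
  have "P = VY * x" using VY by (simp add: x_def)
  also have "\<dots> \<le> VY * (al * r\<^sup>2 + (1 - al) * (1 - r\<^sup>2) + 2 * r * sqrt (al * (1 - al) * (1 - r\<^sup>2)))"
    using k VY by simp
  also have "\<dots> = VY * (2 * r * sqrt ((1 - r\<^sup>2) * al * (1 - al))
             + 1 - al - r\<^sup>2 + 2 * al * r\<^sup>2)"
  proof -
    have eq: "sqrt (al * (1 - al) * (1 - r\<^sup>2)) = sqrt ((1 - r\<^sup>2) * al * (1 - al))"
      by (simp add: ac_simps)
    show ?thesis unfolding eq by (simp add: algebra_simps)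
  qed
  finally show ?thesis by (simp add: r_def al_def)
qed
lemma abs_mult_le_sq: "\<bar>a * b\<bar> \<le> a\<^sup>2 + (b::real)\<^sup>2"
proof -
  have "0 \<le> (\<bar>a\<bar> - \<bar>b\<bar>)\<^sup>2" by simp
  hence "2 * (\<bar>a\<bar> * \<bar>b\<bar>) \<le> a\<^sup>2 + b\<^sup>2" by (simp add: power2_diff)
  moreover have "0 \<le> \<bar>a\<bar> * \<bar>b\<bar>" by simp
  ultimately show ?thesis unfolding abs_mult by linarith
qed

lemma discr_le:
  fixes U V W :: real
  assumes h: "\<And>t. 0 \<le> t\<^sup>2 * U - 2 * t * W + V" and U: "0 \<le> U"
  shows "W\<^sup>2 \<le> U * V"
proof (cases "U = 0")
  case True
  have "W = 0"
  proof (rule ccontr)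
    assume "W \<noteq> 0"
    have "0 \<le> ((V + 1) / (2 * W))\<^sup>2 * U - 2 * ((V + 1) / (2 * W)) * W + V" by (rule h)
    also have "\<dots> = -1" using True \<open>W \<noteq> 0\<close> by (simp add: field_simps)
    finally show False by simp
  qed
  then show ?thesis using True by simp
next
  case False
  hence Up: "U > 0" using U by simp
  have "0 \<le> (W / U)\<^sup>2 * U - 2 * (W / U) * W + V" by (rule h)
  also have "\<dots> = V - W\<^sup>2 / U" using Up by (simp add: field_simps power2_eq_square)
  finally show ?thesis using Up by (simp add: field_simps)
qed

context prob_space
begin

lemma L2_prod:
  fixes u v :: "'a \<Rightarrow> real"
  assumes [measurable]: "u \<in> borel_measurable M" "v \<in> borel_measurable M"
    and su: "integrable M (\<lambda>x. (u x)\<^sup>2)" and sv: "integrable M (\<lambda>x. (v x)\<^sup>2)"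
  shows "integrable M (\<lambda>x. u x * v x)"
  by (rule Bochner_Integration.integrable_bound[of _ "\<lambda>x. (u x)\<^sup>2 + (v x)\<^sup>2"])
     (use su sv abs_mult_le_sq in auto)

lemma L2_CS:
  fixes u v :: "'a \<Rightarrow> real"
  assumes [measurable]: "u \<in> borel_measurable M" "v \<in> borel_measurable M"
    and su: "integrable M (\<lambda>x. (u x)\<^sup>2)" and sv: "integrable M (\<lambda>x. (v x)\<^sup>2)"
  shows "(\<integral>x. u x * v x \<partial>M)\<^sup>2 \<le> (\<integral>x. (u x)\<^sup>2 \<partial>M) * (\<integral>x. (v x)\<^sup>2 \<partial>M)"
proof (rule discr_le)
  have uv: "integrable M (\<lambda>x. u x * v x)" by (rule L2_prod) (use su sv in auto)
  fix t :: real
  have "0 \<le> (\<integral>x. (t * u x - v x)\<^sup>2 \<partial>M)" by simp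
  also have "(\<integral>x. (t * u x - v x)\<^sup>2 \<partial>M) = (\<integral>x. t\<^sup>2 * (u x)\<^sup>2 - 2 * t * (u x * v x) + (v x)\<^sup>2 \<partial>M)"
    by (rule Bochner_Integration.integral_cong) (auto simp: power2_diff power_mult_distrib algebra_simps)
  also have "\<dots> = t\<^sup>2 * (\<integral>x. (u x)\<^sup>2 \<partial>M) - 2 * t * (\<integral>x. u x * v x \<partial>M) + (\<integral>x. (v x)\<^sup>2 \<partial>M)"
    using su sv uv by simp
  finally show "0 \<le> t\<^sup>2 * (\<integral>x. (u x)\<^sup>2 \<partial>M) - 2 * t * (\<integral>x. u x * v x \<partial>M) + (\<integral>x. (v x)\<^sup>2 \<partial>M)" .
qed simp

lemma sq_diff_int:
  fixes u v :: "'a \<Rightarrow> real"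
  assumes "integrable M (\<lambda>x. (u x)\<^sup>2)" "integrable M (\<lambda>x. (v x)\<^sup>2)" "integrable M (\<lambda>x. u x * v x)"
  shows "integrable M (\<lambda>x. (u x - v x)\<^sup>2)"
proof -
  have "(\<lambda>x. (u x - v x)\<^sup>2) = (\<lambda>x. (u x)\<^sup>2 + (v x)\<^sup>2 - 2 * (u x * v x))"
    by (simp add: fun_eq_iff power2_diff mult.assoc)
  then show ?thesis using assms by simp
qed

lemma ce_facts:
  fixes f :: "'a \<Rightarrow> real"
  assumes subalg: "subalgebra M F"
    and [measurable]: "f \<in> borel_measurable M" and sf: "integrable M (\<lambda>x. (f x)\<^sup>2)"
  shows "real_cond_exp M F f \<in> borel_measurable M"
    "real_cond_exp M F f \<in> borel_measurable F"
    "integrable M (\<lambda>x. (real_cond_exp M F f x)\<^sup>2)"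
    "integrable M (real_cond_exp M F f)"
    "(\<integral>x. real_cond_exp M F f x \<partial>M) = (\<integral>x. f x \<partial>M)"
    "\<And>h::'a \<Rightarrow> real. h \<in> borel_measurable F \<Longrightarrow> integrable M (\<lambda>x. (h x)\<^sup>2) \<Longrightarrow>
       (\<integral>x. h x * real_cond_exp M F f x \<partial>M) = (\<integral>x. h x * f x \<partial>M)"
proof -
  interpret finite_measure_subalgebra M F
    by unfold_locales (rule subalg)
  have intf: "integrable M f"
    using square_integrable_imp_integrable[OF _ sf] by simp
  show "real_cond_exp M F f \<in> borel_measurable M" "real_cond_exp M F f \<in> borel_measurable F"
    by simp_all
  show "integrable M (\<lambda>x. (real_cond_exp M F f x)\<^sup>2)"
    using integrable_convex_cond_exp[of f UNIV 0 0 "\<lambda>x. x\<^sup>2"] intf sf convex_power2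
    by auto
  show "integrable M (real_cond_exp M F f)" "(\<integral>x. real_cond_exp M F f x \<partial>M) = (\<integral>x. f x \<partial>M)"
    using real_cond_exp_int[OF intf] by auto
  fix h :: "'a \<Rightarrow> real" assume hF[measurable]: "h \<in> borel_measurable F" and sh: "integrable M (\<lambda>x. (h x)\<^sup>2)"
  have hM[measurable]: "h \<in> borel_measurable M" by (rule measurable_from_subalg[OF subalg hF])
  have "integrable M (\<lambda>x. h x * f x)" by (rule L2_prod) (use sh sf in auto)
  then show "(\<integral>x. h x * real_cond_exp M F f x \<partial>M) = (\<integral>x. h x * f x \<partial>M)"
    by (rule real_cond_exp_intg(2)) auto
qed

lemma ce_proj:
  fixes f g :: "'a \<Rightarrow> real"
  assumes subalg: "subalgebra M F"
    and fm[measurable]: "f \<in> borel_measurable M" and sf: "integrable M (\<lambda>x. (f x)\<^sup>2)"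
    and gm[measurable]: "g \<in> borel_measurable M" and sg: "integrable M (\<lambda>x. (g x)\<^sup>2)"
  shows "variance (real_cond_exp M F f) \<le> variance f"
    "variance (real_cond_exp M F g) \<le> variance g"
    "\<bar>covariance M f g\<bar> \<le> sqrt (variance (real_cond_exp M F f) * variance (real_cond_exp M F g))
        + sqrt ((variance f - variance (real_cond_exp M F f)) * (variance g - variance (real_cond_exp M F g)))"
proof -
  define Cf where "Cf = real_cond_exp M F f"
  define Cg where "Cg = real_cond_exp M F g"
  note F = ce_facts[OF subalg fm sf, folded Cf_def]
  note G = ce_facts[OF subalg gm sg, folded Cg_def]
  have [measurable]: "Cf \<in> borel_measurable M" "Cg \<in> borel_measurable M" using F G by auto
  have intf: "integrable M f" using square_integrable_imp_integrable[OF _ sf] by simp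
  have intg: "integrable M g" using square_integrable_imp_integrable[OF _ sg] by simp
  define mf where "mf = expectation f"
  define mg where "mg = expectation g"
  have mCf: "expectation Cf = mf" using F(5) by (simp add: mf_def)
  have mCg: "expectation Cg = mg" using G(5) by (simp add: mg_def)
  have i1: "integrable M (\<lambda>x. f x * g x)" by (rule L2_prod) (use sf sg in auto)
  have i2: "integrable M (\<lambda>x. f x * Cg x)" by (rule L2_prod) (use sf G in auto)
  have i3: "integrable M (\<lambda>x. Cf x * g x)" by (rule L2_prod) (use F sg in auto)
  have i4: "integrable M (\<lambda>x. Cf x * Cg x)" by (rule L2_prod) (use F G in auto)
  have i5: "integrable M (\<lambda>x. f x * Cf x)" by (rule L2_prod) (use sf F in auto)
  have i6: "integrable M (\<lambda>x. g x * Cg x)" by (rule L2_prod) (use sg G in auto)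
  define K where "K = (\<integral>x. Cf x * Cg x \<partial>M)"
  have e1: "(\<integral>x. Cf x * f x \<partial>M) = (\<integral>x. (Cf x)\<^sup>2 \<partial>M)"
    using F(6)[OF F(2) F(3)] by (simp add: power2_eq_square)
  have e2: "(\<integral>x. Cg x * g x \<partial>M) = (\<integral>x. (Cg x)\<^sup>2 \<partial>M)"
    using G(6)[OF G(2) G(3)] by (simp add: power2_eq_square)
  have e3: "(\<integral>x. Cf x * g x \<partial>M) = K"
    using G(6)[OF F(2) F(3)] by (simp add: K_def)
  have e4: "(\<integral>x. Cg x * f x \<partial>M) = K"
    using F(6)[OF G(2) G(3)] by (simp add: K_def mult.commute)
  have vf: "variance f = (\<integral>x. (f x)\<^sup>2 \<partial>M) - mf\<^sup>2"
    using variance_eq[OF intf sf] by (simp add: mf_def)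
  have vg: "variance g = (\<integral>x. (g x)\<^sup>2 \<partial>M) - mg\<^sup>2"
    using variance_eq[OF intg sg] by (simp add: mg_def)
  have vCf: "variance Cf = (\<integral>x. (Cf x)\<^sup>2 \<partial>M) - mf\<^sup>2"
    using variance_eq[OF F(4) F(3)] mCf by simp
  have vCg: "variance Cg = (\<integral>x. (Cg x)\<^sup>2 \<partial>M) - mg\<^sup>2"
    using variance_eq[OF G(4) G(3)] mCg by simp
  have rf2: "(\<integral>x. (f x - Cf x)\<^sup>2 \<partial>M) = variance f - variance Cf"
  proof -
    have "(\<integral>x. (f x - Cf x)\<^sup>2 \<partial>M) = (\<integral>x. (f x)\<^sup>2 - 2 * (Cf x * f x) + (Cf x)\<^sup>2 \<partial>M)"
      by (rule Bochner_Integration.integral_cong) (auto simp: power2_diff algebra_simps)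
    also have "\<dots> = (\<integral>x. (f x)\<^sup>2 \<partial>M) - 2 * (\<integral>x. Cf x * f x \<partial>M) + (\<integral>x. (Cf x)\<^sup>2 \<partial>M)"
      using sf F(3) i5 by (simp add: mult.commute)
    finally show ?thesis using e1 vf vCf by simp
  qed
  have rg2: "(\<integral>x. (g x - Cg x)\<^sup>2 \<partial>M) = variance g - variance Cg"
  proof -
    have "(\<integral>x. (g x - Cg x)\<^sup>2 \<partial>M) = (\<integral>x. (g x)\<^sup>2 - 2 * (Cg x * g x) + (Cg x)\<^sup>2 \<partial>M)"
      by (rule Bochner_Integration.integral_cong) (auto simp: power2_diff algebra_simps)
    also have "\<dots> = (\<integral>x. (g x)\<^sup>2 \<partial>M) - 2 * (\<integral>x. Cg x * g x \<partial>M) + (\<integral>x. (Cg x)\<^sup>2 \<partial>M)"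
      using sg G(3) i6 by (simp add: mult.commute)
    finally show ?thesis using e2 vg vCg by simp
  qed
  show "variance Cf \<le> variance f" using rf2 
    by (metis (no_types, lifting) diff_ge_0_iff_ge integral_nonneg_AE zero_le_power2 AE_I2)
  show "variance Cg \<le> variance g" using rg2
    by (metis (no_types, lifting) diff_ge_0_iff_ge integral_nonneg_AE zero_le_power2 AE_I2)
  have rfg: "(\<integral>x. (f x - Cf x) * (g x - Cg x) \<partial>M) = (\<integral>x. f x * g x \<partial>M) - K"
  proof -
    have "(\<integral>x. (f x - Cf x) * (g x - Cg x) \<partial>M) = (\<integral>x. f x * g x - Cg x * f x - Cf x * g x + Cf x * Cg x \<partial>M)"
      by (rule Bochner_Integration.integral_cong) (auto simp: algebra_simps)
    also have "\<dots> = (\<integral>x. f x * g x \<partial>M) - (\<integral>x. Cg x * f x \<partial>M) - (\<integral>x. Cf x * g x \<partial>M) + K"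
      using i1 i2 i3 i4 by (simp add: mult.commute K_def)
    finally show ?thesis using e3 e4 by simp
  qed
  have pq: "(\<integral>x. (Cf x - mf) * (Cg x - mg) \<partial>M) = K - mf * mg"
  proof -
    have "(\<integral>x. (Cf x - mf) * (Cg x - mg) \<partial>M) = (\<integral>x. Cf x * Cg x - mg * Cf x - mf * Cg x + mf * mg \<partial>M)"
      by (rule Bochner_Integration.integral_cong) (auto simp: algebra_simps)
    also have "\<dots> = K - mg * mf - mf * mg + mf * mg"
      using i4 F(4) G(4) mCf mCg by (simp add: K_def prob_space)
    finally show ?thesis by simp
  qed
  have cov: "covariance M f g = ((\<integral>x. f x * g x \<partial>M) - K) + (K - mf * mg)"
  proof -
    have "covariance M f g = (\<integral>x. f x * g x - mg * f x - mf * g x + mf * mg \<partial>M)"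
      unfolding covariance_def mf_def[symmetric] mg_def[symmetric]
      by (rule Bochner_Integration.integral_cong) (auto simp: algebra_simps)
    also have "\<dots> = (\<integral>x. f x * g x \<partial>M) - mg * mf - mf * mg + mf * mg"
      using i1 intf intg by (simp add: mf_def mg_def prob_space)
    finally show ?thesis by simp
  qed
  have cs1: "\<bar>(\<integral>x. f x * g x \<partial>M) - K\<bar> \<le> sqrt ((variance f - variance Cf) * (variance g - variance Cg))"
  proof -
    have "((\<integral>x. f x * g x \<partial>M) - K)\<^sup>2 \<le> (variance f - variance Cf) * (variance g - variance Cg)"
    proof -
      have sq1: "integrable M (\<lambda>x. (f x - Cf x)\<^sup>2)"
        using sf F(3) i5 by (rule sq_diff_int)
      have sq2: "integrable M (\<lambda>x. (g x - Cg x)\<^sup>2)"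
        using sg G(3) i6 by (rule sq_diff_int)
      show ?thesis using L2_CS[of "\<lambda>x. f x - Cf x" "\<lambda>x. g x - Cg x"] sq1 sq2 rf2 rg2 rfg by simp
    qed
    then show ?thesis using real_sqrt_le_mono by fastforce
  qed
  have cs2: "\<bar>K - mf * mg\<bar> \<le> sqrt (variance Cf * variance Cg)"
  proof -
    have "(K - mf * mg)\<^sup>2 \<le> variance Cf * variance Cg"
    proof -
      have sq1: "integrable M (\<lambda>x. (Cf x - mf)\<^sup>2)"
        by (rule sq_diff_int) (use F(3) F(4) in auto)
      have sq2: "integrable M (\<lambda>x. (Cg x - mg)\<^sup>2)"
        by (rule sq_diff_int) (use G(3) G(4) in auto)
      show ?thesis using L2_CS[of "\<lambda>x. Cf x - mf" "\<lambda>x. Cg x - mg"] sq1 sq2 pq mCf mCg by simp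
    qed
    then show ?thesis using real_sqrt_le_mono by fastforce
  qed
  show "\<bar>covariance M f g\<bar> \<le> sqrt (variance (real_cond_exp M F f) * variance (real_cond_exp M F g))
        + sqrt ((variance f - variance (real_cond_exp M F f)) * (variance g - variance (real_cond_exp M F g)))"
    unfolding Cf_def[symmetric] Cg_def[symmetric] cov using cs1 cs2 by linarith
qed

end
theorem theorem5:
  fixes M :: "'w measure"
    and MX :: "'x measure" and MS :: "'s measure" and MZ :: "'z measure"
    and X :: "'w \<Rightarrow> 'x" and S :: "'w \<Rightarrow> 's"
    and \<phi> :: "'x \<Rightarrow> 'h :: {real_inner, complete_space}"
    and y a :: 'h
    and g :: "'x \<times> 's \<Rightarrow> 'z"
    and Y A :: "'w \<Rightarrow> real"
    and c :: real
  assumes "prob_space M"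
    and X_meas: "X \<in> measurable M MX"
    and phi_meas: "\<phi> \<in> borel_measurable MX"
    and second_moment: "integrable M (\<lambda>\<omega>. (norm (\<phi> (X \<omega>)))\<^sup>2)"
    and "y \<noteq> 0" and "a \<noteq> 0"
    and Y_def: "\<And>\<omega>. Y \<omega> = inner (\<phi> (X \<omega>)) y"
    and A_def: "\<And>\<omega>. A \<omega> = inner (\<phi> (X \<omega>)) a"
    and varY: "prob_space.variance M Y > 0"
    and varA: "prob_space.variance M A > 0"
    and c_nonneg: "0 \<le> c"
    and c_le: "c \<le> (correlation M Y A)\<^sup>2 * prob_space.variance M A"
    and S_meas: "S \<in> measurable M MS"
    and S_indep: "prob_space.indep_set M (sets (vimage_algebra (space M) S MS))
                    (sets (vimage_algebra (space M) (\<lambda>\<omega>. (X \<omega>, A \<omega>, Y \<omega>))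
                            (MX \<Otimes>\<^sub>M (borel \<Otimes>\<^sub>M borel))))"
    and g_meas: "g \<in> measurable (MX \<Otimes>\<^sub>M MS) MZ"
    and fair: "prob_space.variance M
                 (cond_exp_given M (\<lambda>\<omega>. g (X \<omega>, S \<omega>)) MZ A) \<le> c"
  shows "prob_space.variance M (cond_exp_given M (\<lambda>\<omega>. g (X \<omega>, S \<omega>)) MZ Y)
         \<le> prob_space.variance M Y *
            (2 * \<bar>correlation M Y A\<bar> *
               sqrt ((1 - (correlation M Y A)\<^sup>2) * (c / prob_space.variance M A)
                     * (1 - c / prob_space.variance M A))
             + 1 - c / prob_space.variance M A - (correlation M Y A)\<^sup>2
             + 2 * (c / prob_space.variance M A) * (correlation M Y A)\<^sup>2)"
proof -
  interpret prob_space M by fact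
  define Z where "Z = (\<lambda>\<omega>. g (X \<omega>, S \<omega>))"
  define F where "F = vimage_algebra (space M) Z MZ"
  have Zm: "Z \<in> measurable M MZ"
    unfolding Z_def using measurable_compose[OF measurable_Pair[OF X_meas S_meas] g_meas] by simp
  have subalg: "subalgebra M F"
    unfolding subalgebra_def F_def
  proof
    show "space (vimage_algebra (space M) Z MZ) = space M" by simp
    have "Z \<in> space M \<rightarrow> space MZ" using Zm by (auto intro: measurable_space)
    then show "sets (vimage_algebra (space M) Z MZ) \<subseteq> sets M"
      using Zm by (auto simp: sets_vimage_algebra2 intro: measurable_sets)
  qed
  have phiX[measurable]: "(\<lambda>\<omega>. \<phi> (X \<omega>)) \<in> borel_measurable M"
    using measurable_compose[OF X_meas phi_meas] by simp
  have Yeq: "Y = (\<lambda>\<omega>. inner (\<phi> (X \<omega>)) y)" by (rule ext) (simp add: Y_def)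
  have Aeq: "A = (\<lambda>\<omega>. inner (\<phi> (X \<omega>)) a)" by (rule ext) (simp add: A_def)
  have innm[measurable]: "(\<lambda>\<omega>. inner (\<phi> (X \<omega>)) b) \<in> borel_measurable M" for b :: 'h
    by (rule borel_measurable_continuous_on[OF _ phiX, of "\<lambda>h. inner h b"])
       (intro continuous_intros)
  have Ym: "Y \<in> borel_measurable M" unfolding Yeq by (rule innm)
  have Am: "A \<in> borel_measurable M" unfolding Aeq by (rule innm)
  have sq: "integrable M (\<lambda>\<omega>. (inner (\<phi> (X \<omega>)) b)\<^sup>2)" for b :: 'h
  proof (rule Bochner_Integration.integrable_bound[of _ "\<lambda>\<omega>. (norm b)\<^sup>2 * (norm (\<phi> (X \<omega>)))\<^sup>2"])
    show "integrable M (\<lambda>\<omega>. (norm b)\<^sup>2 * (norm (\<phi> (X \<omega>)))\<^sup>2)"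
      using second_moment by simp
    show "(\<lambda>\<omega>. (inner (\<phi> (X \<omega>)) b)\<^sup>2) \<in> borel_measurable M" by measurable
    show "AE \<omega> in M. norm ((inner (\<phi> (X \<omega>)) b)\<^sup>2) \<le> norm ((norm b)\<^sup>2 * (norm (\<phi> (X \<omega>)))\<^sup>2)"
    proof (rule AE_I2)
      fix \<omega>
      have "\<bar>inner (\<phi> (X \<omega>)) b\<bar>\<^sup>2 \<le> (norm (\<phi> (X \<omega>)) * norm b)\<^sup>2"
        by (rule power_mono) (auto simp: Cauchy_Schwarz_ineq2)
      then show "norm ((inner (\<phi> (X \<omega>)) b)\<^sup>2) \<le> norm ((norm b)\<^sup>2 * (norm (\<phi> (X \<omega>)))\<^sup>2)"
        by (simp add: power_mult_distrib mult.commute)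
    qed
  qed
  have sY: "integrable M (\<lambda>\<omega>. (Y \<omega>)\<^sup>2)" unfolding Yeq by (rule sq)
  have sA: "integrable M (\<lambda>\<omega>. (A \<omega>)\<^sup>2)" unfolding Aeq by (rule sq)
  note P = ce_proj[OF subalg Ym sY Am sA]
  have CY: "cond_exp_given M Z MZ Y = real_cond_exp M F Y" by (simp add: cond_exp_given_def F_def)
  have CA: "cond_exp_given M Z MZ A = real_cond_exp M F A" by (simp add: cond_exp_given_def F_def)
  show ?thesis
    unfolding Z_def[symmetric] CY
  proof (rule real_bound)
    show "0 < variance Y" "0 < variance A" by (fact varY, fact varA)
    show "0 \<le> variance (real_cond_exp M F Y)" "0 \<le> variance (real_cond_exp M F A)"
      by (rule variance_positive)+
    show "variance (real_cond_exp M F Y) \<le> variance Y" "variance (real_cond_exp M F A) \<le> variance A"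
      by (fact P(1), fact P(2))
    show "variance (real_cond_exp M F A) \<le> c" using fair unfolding Z_def[symmetric] CA .
    show "c \<le> (correlation M Y A)\<^sup>2 * variance A" by (fact c_le)
    show "correlation M Y A = covariance M Y A / (sqrt (variance Y) * sqrt (variance A))"
      by (simp add: correlation_def)
    show "\<bar>covariance M Y A\<bar> \<le> sqrt (variance (real_cond_exp M F Y) * variance (real_cond_exp M F A))
        + sqrt ((variance Y - variance (real_cond_exp M F Y)) * (variance A - variance (real_cond_exp M F A)))"
      by (fact P(3))
  qed
qed

end
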